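(* Let $\varphi$ be an automorphism of $E$ with $\varphi^2=\mathrm{id}_E$ and let $\beta=\{e_1,e_2,\ldots\}$ be a basis of $L$. Let $I=\{n\mid\varphi(e_n)=\pm e_n\}$, $I^+=\{i\in I\mid\varphi(e_i)=e_i\}$, $I^-=\{i\in I\mid\varphi(e_i)=-e_i\}$, $J=\mathbb{N}\setminus I$, and $a_j=(e_j+\varphi(e_j))/2$. Suppose $\varphi$ is of type S4, i.e. $I^+$ is finite, $I^-$ is infinite, $J$ is finite and $J\ne\emptyset$. If each $a_j$, $j\in J$, is a linear combination of monomials of length $\ge3$, then $T_2(E_\varphi)=T_2(E_{\varphi_\ell})$, where $\varphi_\ell$ is the linearization of $\varphi$.
   Context: $F$ is a field of characteristic zero, $L$ an infinite-dimensional $F$-vector space with basis $e_1,e_2,\ldots$, $E$ its Grassmann algebra (basis $1$ and monomials $e_{i_1}\cdots e_{i_k}$, $i_1<\cdots<i_k$, $e_ie_j=-e_je_i$); the length of such a monomial is $k$. For an automorphism $\psi$ of $E$ with $\psi^2=\mathrm{id}$, $E_\psi=E_{0,\psi}\oplus E_{1,\psi}$ is the $\mathbb{Z}_2$-grading by the eigenspaces of $\psi$ for eigenvalues $1$ and $-1$. Linearization: write $\varphi(e_i)=u_i+v_i$ with $u_i\in L$ and $v_i$ a linear combination of monomials of length $\ge2$; $\varphi_\ell$ is the endomorphism of $E$ with $\varphi_\ell(e_i)=u_i$. $T_2(A)$ is the ideal of $\mathbb{Z}_2$-graded polynomial identities of a superalgebra $A$ in the free algebra $F\langle Y\cup Z\rangle$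 ($Y$ even variables, $Z$ odd variables). *)

theory Defs
  imports Main
begin

text \<open>An element of E is a finitely supported coefficient function on finite
 subsets S of nat; S = {i1 < ... < ik} stands for the monomial e_i1 ... e_ik.\<close>

type_synonym 'a grass = "nat set \<Rightarrow> 'a"

definition grass :: "'a::field grass set" where
  "grass = {x. finite {S. x S \<noteq> 0} \<and> (\<forall>S. x S \<noteq> 0 \<longrightarrow> finite S)}"

definition gsign :: "nat set \<Rightarrow> nat set \<Rightarrow> 'a::field" where
  "gsign A B = (-1) ^ card {(a,b). a \<in> A \<and> b \<in> B \<and> b < a}"

definition gmult :: "'a::field grass \<Rightarrow> 'a grass \<Rightarrow> 'a grass" where
  "gmult x y = (\<lambda>S. if finite S then (\<Sum>A\<in>Pow S. gsign A (S - A) * x A * y (S - A)) else 0)"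

definition gone :: "'a::field grass" where
  "gone = (\<lambda>S. if S = {} then 1 else 0)"

definition gadd :: "'a::field grass \<Rightarrow> 'a grass \<Rightarrow> 'a grass" where
  "gadd x y = (\<lambda>S. x S + y S)"

definition gscale :: "'a::field \<Rightarrow> 'a grass \<Rightarrow> 'a grass" where
  "gscale c x = (\<lambda>S. c * x S)"

definition gneg :: "'a::field grass \<Rightarrow> 'a grass" where
  "gneg x = (\<lambda>S. - x S)"

definition gen :: "nat \<Rightarrow> 'a::field grass" where
  "gen i = (\<lambda>S. if S = {i} then 1 else 0)"

definition is_automorphism :: "('a::field grass \<Rightarrow> 'a grass) \<Rightarrow> bool" where
  "is_automorphism \<phi> \<longleftrightarrow>
     bij_betw \<phi> grass grass \<and>
     (\<forall>x\<in>grass. \<forall>y\<in>grass. \<phi> (gadd x y) = gadd (\<phi> x) (\<phi> y)) \<and>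
     (\<forall>c. \<forall>x\<in>grass. \<phi> (gscale c x) = gscale c (\<phi> x)) \<and>
     (\<forall>x\<in>grass. \<forall>y\<in>grass. \<phi> (gmult x y) = gmult (\<phi> x) (\<phi> y)) \<and>
     \<phi> gone = gone"

definition lin_part :: "('a::field grass \<Rightarrow> 'a grass) \<Rightarrow> nat \<Rightarrow> 'a grass" where
  "lin_part \<phi> i = (\<lambda>S. if card S = 1 then \<phi> (gen i) S else 0)"

definition mono_prod :: "(nat \<Rightarrow> 'a::field grass) \<Rightarrow> nat set \<Rightarrow> 'a grass" where
  "mono_prod f S = foldr (\<lambda>i acc. gmult (f i) acc) (sorted_list_of_set S) gone"

text \<open>The linearization phi_l: the endomorphism of E with e_i \<mapsto> u_i.\<close>
definition linearization :: "('a::field grass \<Rightarrow> 'a grass) \<Rightarrow> 'a grass \<Rightarrow> 'a grass" where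
  "linearization \<phi> x = (\<lambda>T. \<Sum>S\<in>{S. x S \<noteq> 0}. x S * mono_prod (lin_part \<phi>) S T)"

definition even_part :: "('a::field grass \<Rightarrow> 'a grass) \<Rightarrow> 'a grass set" where
  "even_part \<psi> = {x\<in>grass. \<psi> x = x}"

definition odd_part :: "('a::field grass \<Rightarrow> 'a grass) \<Rightarrow> 'a grass set" where
  "odd_part \<psi> = {x\<in>grass. \<psi> x = gneg x}"

text \<open>Variables: Inl k is the even variable y_k, Inr k the odd variable z_k.
 A noncommutative polynomial is a finitely supported function on words.\<close>

type_synonym gvar = "nat + nat"
type_synonym 'a fpoly = "gvar list \<Rightarrow> 'a"

definition free_alg :: "'a::field fpoly set" where
  "free_alg = {f. finite {w. f w \<noteq> 0}}"

definition eval_word :: "(gvar \<Rightarrow> 'a::field grass) \<Rightarrow> gvar list \<Rightarrow> 'a grass" where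
  "eval_word \<sigma> w = foldr (\<lambda>v acc. gmult (\<sigma> v) acc) w gone"

definition eval_poly :: "'a::field fpoly \<Rightarrow> (gvar \<Rightarrow> 'a grass) \<Rightarrow> 'a grass" where
  "eval_poly f \<sigma> = (\<lambda>T. \<Sum>w\<in>{w. f w \<noteq> 0}. f w * eval_word \<sigma> w T)"

definition graded_assignment :: "('a::field grass \<Rightarrow> 'a grass) \<Rightarrow> (gvar \<Rightarrow> 'a grass) \<Rightarrow> bool" where
  "graded_assignment \<psi> \<sigma> \<longleftrightarrow>
     (\<forall>k. \<sigma> (Inl k) \<in> even_part \<psi>) \<and> (\<forall>k. \<sigma> (Inr k) \<in> odd_part \<psi>)"

definition T2 :: "('a::field grass \<Rightarrow> 'a grass) \<Rightarrow> 'a fpoly set" where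
  "T2 \<psi> = {f\<in>free_alg. \<forall>\<sigma>. graded_assignment \<psi> \<sigma> \<longrightarrow> eval_poly f \<sigma> = (\<lambda>_. 0)}"

definition Iplus :: "('a::field grass \<Rightarrow> 'a grass) \<Rightarrow> nat set" where
  "Iplus \<phi> = {n. \<phi> (gen n) = gen n}"

definition Iminus :: "('a::field grass \<Rightarrow> 'a grass) \<Rightarrow> nat set" where
  "Iminus \<phi> = {n. \<phi> (gen n) = gneg (gen n)}"

definition Iset :: "('a::field grass \<Rightarrow> 'a grass) \<Rightarrow> nat set" where
  "Iset \<phi> = Iplus \<phi> \<union> Iminus \<phi>"

definition Jset :: "('a::field grass \<Rightarrow> 'a grass) \<Rightarrow> nat set" where
  "Jset \<phi> = UNIV - Iset \<phi>"

definition avec :: "('a::field grass \<Rightarrow> 'a grass) \<Rightarrow> nat \<Rightarrow> 'a grass" where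
  "avec \<phi> j = (\<lambda>S. (gen j S + \<phi> (gen j) S) / 2)"

end

theory Submission
  imports Defs
begin


definition inv_cnt :: "nat set \<Rightarrow> nat set \<Rightarrow> nat" where
  "inv_cnt A B = card {(a,b). a \<in> A \<and> b \<in> B \<and> b < a}"

lemma gsign_inv: "gsign A B = (-1) ^ inv_cnt A B"
  by (simp add: gsign_def inv_cnt_def)

lemma inv_cnt_Un_left:
  assumes "finite A" "finite B" "finite C" "A \<inter> B = {}"
  shows "inv_cnt (A \<union> B) C = inv_cnt A C + inv_cnt B C"
proof -
  have e: "{(a,b). a \<in> A \<union> B \<and> b \<in> C \<and> b < a} =
     {(a,b). a \<in> A \<and> b \<in> C \<and> b < a} \<union> {(a,b). a \<in> B \<and> b \<in> C \<and> b < a}" by auto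
  have f1: "finite {(a,b). a \<in> A \<and> b \<in> C \<and> b < a}"
    by (rule finite_subset[of _ "A \<times> C"]) (use assms in auto)
  have f2: "finite {(a,b). a \<in> B \<and> b \<in> C \<and> b < a}"
    by (rule finite_subset[of _ "B \<times> C"]) (use assms in auto)
  show ?thesis unfolding inv_cnt_def e
    by (rule card_Un_disjoint[OF f1 f2]) (use assms in auto)
qed

lemma inv_cnt_Un_right:
  assumes "finite A" "finite B" "finite C" "B \<inter> C = {}"
  shows "inv_cnt A (B \<union> C) = inv_cnt A B + inv_cnt A C"
proof -
  have e: "{(a,b). a \<in> A \<and> b \<in> B \<union> C \<and> b < a} =
     {(a,b). a \<in> A \<and> b \<in> B \<and> b < a} \<union> {(a,b). a \<in> A \<and> b \<in> C \<and> b < a}" by auto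
  have f1: "finite {(a,b). a \<in> A \<and> b \<in> B \<and> b < a}"
    by (rule finite_subset[of _ "A \<times> B"]) (use assms in auto)
  have f2: "finite {(a,b). a \<in> A \<and> b \<in> C \<and> b < a}"
    by (rule finite_subset[of _ "A \<times> C"]) (use assms in auto)
  show ?thesis unfolding inv_cnt_def e
    by (rule card_Un_disjoint[OF f1 f2]) (use assms in auto)
qed

lemma inv_cnt_swap:
  assumes "finite A" "finite B" "A \<inter> B = {}"
  shows "inv_cnt A B + inv_cnt B A = card A * card B"
proof -
  have e2: "inv_cnt B A = card {(a,b). a \<in> A \<and> b \<in> B \<and> a < b}"
    unfolding inv_cnt_def
    by (rule bij_betw_same_card[where f="\<lambda>(x,y). (y,x)"]) (auto simp: bij_betw_def inj_on_def image_def)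
  have e: "A \<times> B = {(a,b). a \<in> A \<and> b \<in> B \<and> b < a} \<union> {(a,b). a \<in> A \<and> b \<in> B \<and> a < b}"
    using assms by (auto simp: disjoint_iff) (metis linorder_neqE_nat)
  have f1: "finite {(a,b). a \<in> A \<and> b \<in> B \<and> b < a}"
    by (rule finite_subset[of _ "A \<times> B"]) (use assms in auto)
  have f2: "finite {(a,b). a \<in> A \<and> b \<in> B \<and> a < b}"
    by (rule finite_subset[of _ "A \<times> B"]) (use assms in auto)
  have "card (A \<times> B) = inv_cnt A B + card {(a,b). a \<in> A \<and> b \<in> B \<and> a < b}"
    unfolding e inv_cnt_def by (rule card_Un_disjoint[OF f1 f2]) auto
  then show ?thesis using e2 by (simp add: card_cartesian_product)
qed

lemma inv_cnt_empty[simp]: "inv_cnt {} B = 0" "inv_cnt A {} = 0"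
  by (simp_all add: inv_cnt_def)

lemma gsign_empty[simp]: "gsign {} B = 1" "gsign A {} = 1"
  by (simp_all add: gsign_inv)

lemma gsign_cocycle:
  assumes "finite A" "finite B" "finite C" "A \<inter> B = {}" "A \<inter> C = {}" "B \<inter> C = {}"
  shows "gsign (A \<union> B) C * gsign A B = (gsign A (B \<union> C) * gsign B C :: 'a::field)"
  using assms by (simp add: gsign_inv inv_cnt_Un_left inv_cnt_Un_right power_add[symmetric] ac_simps)

lemma neg1_double: "(-1::'a::comm_ring_1) ^ (n + (n + m)) = (-1) ^ m"
proof -
  have "(-1::'a) ^ n * (-1) ^ n = 1"
    by (rule minus_one_mult_self)
  then show ?thesis by (simp add: power_add mult.assoc[symmetric])
qed

lemma gsign_swap:
  assumes "finite A" "finite B" "A \<inter> B = {}"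
  shows "(gsign B A :: 'a::field) = (-1) ^ (card A * card B) * gsign A B"
proof -
  have "(-1::'a) ^ (card A * card B) * gsign A B = (-1) ^ (inv_cnt A B + inv_cnt B A) * (-1) ^ inv_cnt A B"
    using inv_cnt_swap[OF assms] by (simp add: gsign_inv)
  also have "\<dots> = (-1) ^ inv_cnt B A"
  proof -
    have "inv_cnt A B + inv_cnt B A + inv_cnt A B = inv_cnt A B + (inv_cnt A B + inv_cnt B A)" by simp
    then show ?thesis by (simp only: neg1_double flip: power_add)
  qed
  finally show ?thesis by (simp add: gsign_inv)
qed



lemma gmult_fin: "finite S \<Longrightarrow> gmult x y S = (\<Sum>A\<in>Pow S. gsign A (S - A) * x A * y (S - A))"
  by (simp add: gmult_def)

lemma gmult_inf: "infinite S \<Longrightarrow> gmult x y S = 0"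
  by (simp add: gmult_def)

lemma gmult_assoc: "gmult (gmult x y) z = gmult x (gmult y z)"
proof (rule ext)
  fix S
  show "gmult (gmult x y) z S = gmult x (gmult y z) S"
  proof (cases "finite S")
    case False then show ?thesis by (simp add: gmult_def)
  next
    case True
    define F where "F U A = gsign U (S - U) * gsign A (U - A) * x A * y (U - A) * z (S - U)" for U A
    have fP: "finite (Pow S)" using True by simp
    have "gmult (gmult x y) z S = (\<Sum>U\<in>Pow S. \<Sum>A\<in>{A. A \<in> Pow S \<and> A \<subseteq> U}. F U A)"
      unfolding gmult_fin[OF True, of "gmult x y"]
    proof (rule sum.cong[OF refl])
      fix U assume U: "U \<in> Pow S"
      then have fU: "finite U" using True finite_subset by auto
      have e: "{A. A \<in> Pow S \<and> A \<subseteq> U} = Pow U" using U by auto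
      show "gsign U (S - U) * gmult x y U * z (S - U) = (\<Sum>A\<in>{A. A \<in> Pow S \<and> A \<subseteq> U}. F U A)"
        unfolding e gmult_fin[OF fU] F_def
        by (simp add: sum_distrib_left sum_distrib_right ac_simps)
    qed
    also have "\<dots> = (\<Sum>A\<in>Pow S. \<Sum>U\<in>{U. U \<in> Pow S \<and> A \<subseteq> U}. F U A)"
      by (rule sum.swap_restrict[OF fP fP])
    also have "\<dots> = (\<Sum>A\<in>Pow S. \<Sum>B\<in>Pow (S - A). F (A \<union> B) A)"
    proof (rule sum.cong[OF refl])
      fix A assume A: "A \<in> Pow S"
      show "(\<Sum>U\<in>{U. U \<in> Pow S \<and> A \<subseteq> U}. F U A) = (\<Sum>B\<in>Pow (S - A). F (A \<union> B) A)"
        by (rule sum.reindex_bij_witness[where i="\<lambda>B. A \<union> B" and j="\<lambda>U. U - A"]) (use A in \<open>auto simp: Un_absorb1\<close>)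
    qed
    also have "\<dots> = gmult x (gmult y z) S"
      unfolding gmult_fin[OF True]
    proof (rule sum.cong[OF refl])
      fix A assume A: "A \<in> Pow S"
      have fSA: "finite (S - A)" using True by simp
      show "(\<Sum>B\<in>Pow (S - A). F (A \<union> B) A) = gsign A (S - A) * x A * gmult y z (S - A)"
        unfolding gmult_fin[OF fSA] sum_distrib_left
      proof (rule sum.cong[OF refl])
        fix B assume B: "B \<in> Pow (S - A)"
        have fA: "finite A" "finite B" "finite (S - A - B)" using A B True by (auto intro: finite_subset)
        have e1: "A \<union> B - A = B" "S - (A \<union> B) = S - A - B" "B \<union> (S - A - B) = S - A" using A B by auto
        have c: "gsign (A \<union> B) (S - A - B) * gsign A B = (gsign A (B \<union> (S - A - B)) * gsign B (S - A - B) :: 'a)"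
          by (rule gsign_cocycle) (use fA B in auto)
        show "F (A \<union> B) A = gsign A (S - A) * x A * (gsign B (S - A - B) * y B * z (S - A - B))"
          unfolding F_def e1 using c[unfolded e1] by (simp add: ac_simps)
      qed
    qed
    finally show ?thesis .
  qed
qed



definition lc :: "'b set \<Rightarrow> ('b \<Rightarrow> 'a::field) \<Rightarrow> ('b \<Rightarrow> 'a grass) \<Rightarrow> 'a grass" where
  "lc F c P = (\<lambda>T. \<Sum>s\<in>F. c s * P s T)"

definition mon :: "nat set \<Rightarrow> 'a::field grass" where
  "mon S = (\<lambda>T. if T = S then 1 else 0)"

definition godd :: "'a::field grass \<Rightarrow> bool" where
  "godd x \<longleftrightarrow> (\<forall>S. x S \<noteq> 0 \<longrightarrow> odd (card S))"

lemma gmult_lc_left: "gmult (lc F c P) y = lc F c (\<lambda>s. gmult (P s) y)"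
proof (rule ext)
  fix T show "gmult (lc F c P) y T = lc F c (\<lambda>s. gmult (P s) y) T"
  proof (cases "finite T")
    case True
    show ?thesis unfolding lc_def gmult_fin[OF True] sum_distrib_left sum_distrib_right
      by (subst sum.swap) (simp add: ac_simps)
  qed (simp add: gmult_inf lc_def)
qed

lemma gmult_lc_right: "gmult y (lc F c P) = lc F c (\<lambda>s. gmult y (P s))"
proof (rule ext)
  fix T show "gmult y (lc F c P) T = lc F c (\<lambda>s. gmult y (P s)) T"
  proof (cases "finite T")
    case True
    show ?thesis unfolding lc_def gmult_fin[OF True] sum_distrib_left sum_distrib_right
      by (subst sum.swap) (simp add: ac_simps)
  qed (simp add: gmult_inf lc_def)
qed

lemma gmult_scale_left: "gmult (gscale c x) y = gscale c (gmult x y)"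
  by (rule ext) (simp add: gmult_def gscale_def sum_distrib_left ac_simps)

lemma gmult_scale_right: "gmult x (gscale c y) = gscale c (gmult x y)"
  by (rule ext) (simp add: gmult_def gscale_def sum_distrib_left ac_simps)

lemma gmult_zero_left[simp]: "gmult (\<lambda>_. 0) y = (\<lambda>_. 0)"
  by (rule ext) (simp add: gmult_def)

lemma gmult_zero_right[simp]: "gmult y (\<lambda>_. 0) = (\<lambda>_. 0)"
  by (rule ext) (simp add: gmult_def)

lemma gneg_scale: "gneg x = gscale (-1) x"
  by (simp add: gneg_def gscale_def)

lemma gscale_gscale[simp]: "gscale a (gscale b x) = gscale (a * b) x"
  by (simp add: gscale_def ac_simps)

lemma gscale_one[simp]: "gscale 1 x = x"
  by (simp add: gscale_def)

lemma gscale_zero[simp]: "gscale 0 x = (\<lambda>_. 0)"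
  by (simp add: gscale_def)

lemma grass_iff: "x \<in> grass \<longleftrightarrow> finite {S. x S \<noteq> 0} \<and> (\<forall>S. x S \<noteq> 0 \<longrightarrow> finite S)"
  by (simp add: grass_def)

lemma zero_grass[simp]: "(\<lambda>_. 0) \<in> grass"
  by (simp add: grass_def)

lemma gadd_grass[simp]: "x \<in> grass \<Longrightarrow> y \<in> grass \<Longrightarrow> gadd x y \<in> grass"
  unfolding grass_def gadd_def
  by (auto intro: finite_subset[of _ "{S. x S \<noteq> 0} \<union> {S. y S \<noteq> 0}"]) (metis add.right_neutral)

lemma gscale_grass[simp]: "x \<in> grass \<Longrightarrow> gscale c x \<in> grass"
  unfolding grass_def gscale_def
  by (auto intro: finite_subset[of _ "{S. x S \<noteq> 0}"])

lemma gneg_grass[simp]: "x \<in> grass \<Longrightarrow> gneg x \<in> grass"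
  by (simp add: gneg_scale)

lemma mon_grass[simp]: "finite S \<Longrightarrow> mon S \<in> grass"
  unfolding grass_def mon_def by (auto intro: finite_subset[of _ "{S}"])

lemma gen_grass[simp]: "gen i \<in> grass"
  unfolding grass_def gen_def by (auto intro: finite_subset[of _ "{{i}}"])

lemma gone_grass[simp]: "gone \<in> grass"
  unfolding grass_def gone_def by (auto intro: finite_subset[of _ "{{}}"])

lemma lc_empty[simp]: "lc {} c P = (\<lambda>_. 0)"
  by (simp add: lc_def)

lemma lc_insert: "finite F \<Longrightarrow> s \<notin> F \<Longrightarrow> lc (insert s F) c P = gadd (gscale (c s) (P s)) (lc F c P)"
  by (simp add: lc_def gadd_def gscale_def)

lemma lc_grass[simp]: "finite F \<Longrightarrow> (\<And>s. s \<in> F \<Longrightarrow> P s \<in> grass) \<Longrightarrow> lc F c P \<in> grass"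
  by (induction F rule: finite_induct) (simp_all add: lc_insert)

lemma gmult_grass[simp]:
  assumes x: "x \<in> grass" and y: "y \<in> grass" shows "gmult x y \<in> grass"
proof -
  have "{T. gmult x y T \<noteq> 0} \<subseteq> (\<lambda>(A,B). A \<union> B) ` ({A. x A \<noteq> 0} \<times> {B. y B \<noteq> 0})"
  proof
    fix T assume "T \<in> {T. gmult x y T \<noteq> 0}"
    then have nz: "gmult x y T \<noteq> 0" by simp
    then have fT: "finite T" using gmult_inf by blast
    from nz obtain A where A: "A \<in> Pow T" "gsign A (T - A) * x A * y (T - A) \<noteq> 0"
      unfolding gmult_fin[OF fT] using sum.not_neutral_contains_not_neutral by blast
    then show "T \<in> (\<lambda>(A,B). A \<union> B) ` ({A. x A \<noteq> 0} \<times> {B. y B \<noteq> 0})"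
      by (auto intro!: image_eqI[of _ _ "(A, T - A)"])
  qed
  moreover have "finite ((\<lambda>(A,B). A \<union> B) ` ({A. x A \<noteq> 0} \<times> {B. y B \<noteq> 0}))"
    using x y by (simp add: grass_def)
  ultimately have "finite {T. gmult x y T \<noteq> 0}" by (rule finite_subset)
  moreover have "\<forall>S. gmult x y S \<noteq> 0 \<longrightarrow> finite S" using gmult_inf by blast
  ultimately show ?thesis by (simp add: grass_def)
qed

lemma gmult_gone_left:
  assumes z: "z \<in> grass" shows "gmult gone z = z"
proof (rule ext)
  fix S show "gmult gone z S = z S"
  proof (cases "finite S")
    case True
    have "gmult gone z S = (\<Sum>A\<in>Pow S. if A = {} then z S else 0)"
      unfolding gmult_fin[OF True] by (rule sum.cong) (auto simp: gone_def)
    also have "\<dots> = z S" using True by (simp add: sum.delta')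
    finally show ?thesis .
  next
    case False then show ?thesis using z by (auto simp: gmult_inf grass_def)
  qed
qed

lemma gmult_gen_left:
  assumes "finite T"
  shows "gmult (gen i) x T = (if i \<in> T then gsign {i} (T - {i}) * x (T - {i}) else 0)"
proof -
  have "gmult (gen i) x T = (\<Sum>A\<in>Pow T. if A = {i} then gsign {i} (T - {i}) * x (T - {i}) else 0)"
    unfolding gmult_fin[OF assms] by (rule sum.cong) (auto simp: gen_def)
  also have "\<dots> = (if i \<in> T then gsign {i} (T - {i}) * x (T - {i}) else 0)"
    using assms by (simp add: sum.delta')
  finally show ?thesis .
qed

lemma gmult_gen_right:
  assumes "finite T"
  shows "gmult x (gen i) T = (if i \<in> T then gsign (T - {i}) {i} * x (T - {i}) else 0)"
proof -
  have "gmult x (gen i) T = (\<Sum>A\<in>Pow T. if A = T - {i} then (if i \<in> T then gsign (T - {i}) {i} * x (T - {i}) else 0) else 0)"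
    unfolding gmult_fin[OF assms]
  proof (rule sum.cong[OF refl])
    fix A assume A: "A \<in> Pow T"
    have "(T - A = {i}) \<longleftrightarrow> (i \<in> T \<and> A = T - {i})" using A by auto
    then show "gsign A (T - A) * x A * gen i (T - A) =
      (if A = T - {i} then (if i \<in> T then gsign (T - {i}) {i} * x (T - {i}) else 0) else 0)"
      using A by (auto simp: gen_def)
  qed
  also have "\<dots> = (if i \<in> T then gsign (T - {i}) {i} * x (T - {i}) else 0)"
    using assms by (simp add: sum.delta')
  finally show ?thesis .
qed

lemma godd_gen[simp]: "godd (gen i)"
  by (simp add: godd_def gen_def)

lemma godd_scale[simp]: "godd x \<Longrightarrow> godd (gscale c x)"
  by (simp add: godd_def gscale_def)

lemma godd_add[simp]: "godd x \<Longrightarrow> godd y \<Longrightarrow> godd (gadd x y)"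
  by (auto simp: godd_def gadd_def) (metis add.right_neutral)

lemma gmult_anticomm:
  fixes x y :: "'a::field grass"
  assumes ox: "godd x" and oy: "godd y"
  shows "gmult x y = gneg (gmult y x)"
proof (rule ext)
  fix T show "gmult x y T = gneg (gmult y x) T"
  proof (cases "finite T")
    case True
    have "gmult y x T = (\<Sum>A\<in>Pow T. gsign (T - A) A * y (T - A) * x A)"
      unfolding gmult_fin[OF True]
      by (rule sum.reindex_bij_witness[where i="\<lambda>A. T - A" and j="\<lambda>A. T - A"]) (auto simp: double_diff)
    also have "\<dots> = - (\<Sum>A\<in>Pow T. gsign A (T - A) * x A * y (T - A))"
      unfolding sum_negf[symmetric]
    proof (rule sum.cong[OF refl])
      fix A assume A: "A \<in> Pow T"
      show "gsign (T - A) A * y (T - A) * x A = - (gsign A (T - A) * x A * y (T - A))"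
      proof (cases "x A = 0 \<or> y (T - A) = 0")
        case False
        then have "odd (card A)" "odd (card (T - A))" using ox oy by (auto simp: godd_def)
        then have "odd (card A * card (T - A))" by simp
        moreover have "finite A" using A True by (auto intro: finite_subset)
        ultimately have "(gsign (T - A) A :: 'a) = - gsign A (T - A)"
          using gsign_swap[of A "T - A"] True by auto
        then show ?thesis by simp
      qed auto
    qed
    finally show ?thesis unfolding gneg_def gmult_fin[OF True] by simp
  qed (simp add: gmult_inf gneg_def)
qed

lemma gmult_square:
  fixes x :: "'a::field_char_0 grass"
  assumes ox: "godd x"
  shows "gmult x x = (\<lambda>_. 0)"
proof (rule ext)
  fix T
  have "gmult x x T = - gmult x x T"
    using gmult_anticomm[OF ox ox] by (metis gneg_def)
  then show "gmult x x T = 0" by simp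
qed



definition prodl :: "(nat \<Rightarrow> 'a::field grass) \<Rightarrow> nat list \<Rightarrow> 'a grass" where
  "prodl g xs = foldr (\<lambda>i acc. gmult (g i) acc) xs gone"

lemma prodl_Nil[simp]: "prodl g [] = gone" by (simp add: prodl_def)
lemma prodl_Cons[simp]: "prodl g (i # xs) = gmult (g i) (prodl g xs)" by (simp add: prodl_def)

lemma mono_prod_prodl: "mono_prod g S = prodl g (sorted_list_of_set S)"
  by (simp add: mono_prod_def prodl_def)

lemma prodl_grass[simp]: "(\<And>i. g i \<in> grass) \<Longrightarrow> prodl g xs \<in> grass"
  by (induction xs) simp_all

lemma gsign_single_low: "\<forall>x\<in>X. i < x \<Longrightarrow> gsign {i} X = 1"
proof -
  assume a: "\<forall>x\<in>X. i < x"
  have e: "{(a, b). a = i \<and> b \<in> X \<and> b < a} = {}" using a by auto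
  show ?thesis unfolding gsign_def by (simp add: e)
qed

lemma gsign_single_insert:
  assumes "s < i" "s \<notin> X" "finite X"
  shows "(gsign {i} (insert s X) :: 'a::field) = - gsign {i} X"
proof -
  have "inv_cnt {i} ({s} \<union> X) = inv_cnt {i} {s} + inv_cnt {i} X"
    by (rule inv_cnt_Un_right) (use assms in auto)
  moreover have "inv_cnt {i} {s} = 1"
  proof -
    have "{(a, b). a \<in> {i} \<and> b \<in> {s} \<and> b < a} = {(i,s)}" using assms by auto
    then show ?thesis by (simp add: inv_cnt_def)
  qed
  ultimately show ?thesis by (simp add: gsign_inv)
qed

lemma prodl_gen_mult:
  fixes g :: "nat \<Rightarrow> 'a::field_char_0 grass"
  assumes od: "\<And>i. godd (g i)" and so: "sorted_wrt (<) xs"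
  shows "gmult (g i) (prodl g xs) = gscale (if i \<in> set xs then 0 else gsign {i} (set xs)) (prodl g (insort i xs))"
  using so
proof (induction xs)
  case Nil
  then show ?case by simp
next
  case (Cons s xs)
  have sxs: "sorted_wrt (<) xs" and lt: "\<forall>x\<in>set xs. s < x" using Cons.prems by auto
  consider "i < s" | "i = s" | "s < i" by linarith
  then show ?case
  proof cases
    case 1
    then have a: "\<forall>x\<in>set (s # xs). i < x" using lt by auto
    then have "i \<notin> set (s # xs)" by blast
    then show ?thesis using 1 a by (simp add: gsign_single_low del: set_simps)
  next
    case 2
    have "gmult (g i) (prodl g (s # xs)) = gmult (gmult (g s) (g s)) (prodl g xs)"
      using 2 by (simp add: gmult_assoc)
    also have "\<dots> = (\<lambda>_. 0)" using gmult_square[OF od] by simp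
    finally show ?thesis using 2 by simp
  next
    case 3
    have nsx: "s \<notin> set xs" using lt by auto
    have "gmult (g i) (prodl g (s # xs)) = gmult (gmult (g i) (g s)) (prodl g xs)"
      by (simp add: gmult_assoc)
    also have "\<dots> = gscale (-1) (gmult (g s) (gmult (g i) (prodl g xs)))"
      using gmult_anticomm[OF od od, of i s] by (simp add: gneg_scale gmult_scale_left gmult_assoc)
    also have "\<dots> = gscale (-1 * (if i \<in> set xs then 0 else gsign {i} (set xs))) (prodl g (s # insort i xs))"
      using Cons.IH[OF sxs] by (simp add: gmult_scale_right)
    also have "\<dots> = gscale (if i \<in> set (s # xs) then 0 else gsign {i} (set (s # xs))) (prodl g (insort i (s # xs)))"
      using 3 nsx by (simp add: gsign_single_insert)
    finally show ?thesis .
  qed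
qed

definition Lin :: "(nat set \<Rightarrow> 'a::field grass) \<Rightarrow> 'a grass \<Rightarrow> 'a grass" where
  "Lin P x = (\<lambda>T. \<Sum>S\<in>{S. x S \<noteq> 0}. x S * P S T)"

lemma Lin_lc_def: "Lin P x = lc {S. x S \<noteq> 0} x P"
  by (simp add: Lin_def lc_def)

lemma Lin_lc:
  assumes "finite F" "{S. x S \<noteq> 0} \<subseteq> F"
  shows "Lin P x = lc F x P"
  unfolding Lin_def lc_def
  by (rule ext, rule sum.mono_neutral_left) (use assms in auto)

lemma lc_cong: "(\<And>s. s \<in> F \<Longrightarrow> P s = Q s) \<Longrightarrow> lc F c P = lc F c Q"
  by (simp add: lc_def)

lemma lc_mon:
  assumes "finite {S. x S \<noteq> 0}" shows "lc {S. x S \<noteq> 0} x mon = x"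
proof (rule ext)
  fix T
  have "lc {S. x S \<noteq> 0} x mon T = (\<Sum>S\<in>{S. x S \<noteq> 0}. if T = S then x T else 0)"
    unfolding lc_def by (rule sum.cong) (auto simp: mon_def)
  also have "\<dots> = x T" using assms by (simp add: sum.delta)
  finally show "lc {S. x S \<noteq> 0} x mon T = x T" .
qed

lemma Lin_gadd:
  assumes "x \<in> grass" "y \<in> grass"
  shows "Lin P (gadd x y) = gadd (Lin P x) (Lin P y)"
proof -
  let ?F = "{S. x S \<noteq> 0} \<union> {S. y S \<noteq> 0}"
  have f: "finite ?F" using assms by (simp add: grass_def)
  have "Lin P (gadd x y) = lc ?F (gadd x y) P"
    by (rule Lin_lc[OF f]) (auto simp: gadd_def)
  moreover have "Lin P x = lc ?F x P" by (rule Lin_lc[OF f]) auto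
  moreover have "Lin P y = lc ?F y P" by (rule Lin_lc[OF f]) auto
  ultimately show ?thesis
    by (simp add: lc_def gadd_def sum.distrib distrib_right)
qed

lemma Lin_gscale:
  assumes "x \<in> grass"
  shows "Lin P (gscale c x) = gscale c (Lin P x)"
proof -
  let ?F = "{S. x S \<noteq> 0}"
  have f: "finite ?F" using assms by (simp add: grass_def)
  have "Lin P (gscale c x) = lc ?F (gscale c x) P"
    by (rule Lin_lc[OF f]) (auto simp: gscale_def)
  moreover have "Lin P x = lc ?F x P" by (rule Lin_lc[OF f]) auto
  ultimately show ?thesis
    by (simp add: lc_def gscale_def sum_distrib_left ac_simps)
qed

lemma Lin_mon: "Lin P (mon S) = P S"
proof -
  have "Lin P (mon S) = lc {S} (mon S) P" by (rule Lin_lc) (auto simp: mon_def)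
  then show ?thesis by (simp add: lc_def mon_def)
qed

lemma Lin_zero[simp]: "Lin P (\<lambda>_. 0) = (\<lambda>_. 0)"
  by (simp add: Lin_def)

lemma Lin_grass:
  assumes "x \<in> grass" "\<And>S. finite S \<Longrightarrow> P S \<in> grass"
  shows "Lin P x \<in> grass"
  unfolding Lin_lc_def
  by (rule lc_grass) (use assms in \<open>auto simp: grass_def\<close>)

definition glinear :: "('a::field grass \<Rightarrow> 'a grass) \<Rightarrow> bool" where
  "glinear h \<longleftrightarrow> (\<forall>x\<in>grass. \<forall>y\<in>grass. h (gadd x y) = gadd (h x) (h y)) \<and>
     (\<forall>c. \<forall>x\<in>grass. h (gscale c x) = gscale c (h x))"

lemma glinear_Lin: "glinear (Lin P)"
  by (simp add: glinear_def Lin_gadd Lin_gscale)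

lemma glinear_lc:
  assumes h: "glinear h" and F: "finite F" and P: "\<And>s. s \<in> F \<Longrightarrow> P s \<in> grass"
  shows "h (lc F c P) = lc F c (\<lambda>s. h (P s))"
  using F P
proof (induction F rule: finite_induct)
  case empty
  have "h (gscale 0 gone) = gscale 0 (h gone)" using h gone_grass unfolding glinear_def by blast
  then have "h (\<lambda>_. 0) = (\<lambda>_. 0)" by simp
  then show ?case by simp
next
  case (insert s F)
  then show ?case using h by (simp add: lc_insert glinear_def)
qed

lemma glinear_gneg: "glinear h \<Longrightarrow> x \<in> grass \<Longrightarrow> h (gneg x) = gneg (h x)"
  by (simp add: glinear_def gneg_scale)



definition unitri :: "(nat \<Rightarrow> 'a::field grass) \<Rightarrow> nat set \<Rightarrow> bool" where
  "unitri g M \<longleftrightarrow> (\<forall>i. g i \<in> grass) \<and> (\<forall>i. g i {i} = 1) \<and>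
     (\<forall>i U. g i U \<noteq> 0 \<longrightarrow> U = {i} \<or> 2 \<le> card U) \<and>
     (\<forall>i U. g i U \<noteq> 0 \<longrightarrow> U \<subseteq> insert i M)"

lemma card_split: "finite T \<Longrightarrow> A \<subseteq> T \<Longrightarrow> card T = card A + card (T - A)"
  by (metis card_Diff_subset card_mono finite_subset le_add_diff_inverse)

lemma prodl_filt:
  assumes u: "unitri g M" and so: "sorted_wrt (<) xs"
  shows "(\<forall>T. prodl g xs T \<noteq> 0 \<longrightarrow> length xs \<le> card T \<and> T \<subseteq> set xs \<union> M \<and> finite T) \<and>
         (\<forall>T. finite T \<longrightarrow> card T = length xs \<longrightarrow> prodl g xs T = (if T = set xs then 1 else 0))"
  using so
proof (induction xs)
  case Nil
  show ?case by (auto simp: gone_def)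
next
  case (Cons s xs)
  have sxs: "sorted_wrt (<) xs" and lt: "\<forall>x\<in>set xs. s < x" using Cons.prems by auto
  note IH = Cons.IH[OF sxs]
  note IH1 = conjunct1[OF IH, rule_format] and IH2 = conjunct2[OF IH, rule_format]
  have H2: "g s {s} = 1" and H3: "\<And>U. g s U \<noteq> 0 \<Longrightarrow> U = {s} \<or> 2 \<le> card U"
    and H4: "\<And>U. g s U \<noteq> 0 \<Longrightarrow> U \<subseteq> insert s M" using u by (auto simp: unitri_def)
  have H3': "\<And>U. g s U \<noteq> 0 \<Longrightarrow> 1 \<le> card U \<and> finite U"
  proof -
    fix U assume "g s U \<noteq> 0"
    then have "U = {s} \<or> 2 \<le> card U" by (rule H3)
    then show "1 \<le> card U \<and> finite U"
    proof
      assume "2 \<le> card U"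
      then show ?thesis by (metis card.infinite not_numeral_le_zero one_le_numeral order_trans)
    qed simp
  qed
  have A: "\<forall>T. prodl g (s # xs) T \<noteq> 0 \<longrightarrow> length (s # xs) \<le> card T \<and> T \<subseteq> set (s # xs) \<union> M \<and> finite T"
  proof (intro allI impI)
    fix T :: "nat set" assume nz: "prodl g (s # xs) T \<noteq> 0"
    have fT: "finite T"
    proof (rule ccontr)
      assume "infinite T"
      then have "prodl g (s # xs) T = 0" by (simp add: gmult_inf)
      with nz show False by simp
    qed
    from nz have "(\<Sum>A\<in>Pow T. gsign A (T - A) * g s A * prodl g xs (T - A)) \<noteq> 0"
      by (simp add: gmult_fin[OF fT])
    then obtain A where A: "A \<in> Pow T" "gsign A (T - A) * g s A * prodl g xs (T - A) \<noteq> 0"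
      by (rule sum.not_neutral_contains_not_neutral)
    then have a1: "g s A \<noteq> 0" and a2: "prodl g xs (T - A) \<noteq> 0" by auto
    have c: "card T = card A + card (T - A)"
      using A(1) fT card_split by blast
    show "length (s # xs) \<le> card T \<and> T \<subseteq> set (s # xs) \<union> M \<and> finite T"
    proof -
      have l1: "length xs \<le> card (T - A)" and l2: "T - A \<subseteq> set xs \<union> M" using IH1[OF a2] by blast+
      have l3: "1 \<le> card A" using H3'[OF a1] by blast
      have l4: "A \<subseteq> insert s M" using H4[OF a1] by blast
      have "length (s # xs) \<le> card T" using l1 l3 c by simp
      moreover have "T \<subseteq> set (s # xs) \<union> M" using l2 l4 by auto
      ultimately show ?thesis using fT by blast
    qed
  qed
  have B: "\<forall>T. finite T \<longrightarrow> card T = length (s # xs) \<longrightarrow> prodl g (s # xs) T = (if T = set (s # xs) then 1 else 0)"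
  proof (intro allI impI)
    fix T :: "nat set" assume fT: "finite T" and cT: "card T = length (s # xs)"
    let ?t = "\<lambda>A. gsign A (T - A) * g s A * prodl g xs (T - A)"
    have "prodl g (s # xs) T = (\<Sum>A\<in>Pow T. if A = {s} then ?t A else 0)"
      unfolding prodl_Cons gmult_fin[OF fT]
    proof (rule sum.cong[OF refl])
      fix A assume A: "A \<in> Pow T"
      show "?t A = (if A = {s} then ?t A else 0)"
      proof (cases "A = {s} \<or> g s A = 0 \<or> prodl g xs (T - A) = 0")
        case False
        then have "2 \<le> card A" "length xs \<le> card (T - A)" using H3 IH1 by blast+
        moreover have "card T = card A + card (T - A)"
          using A fT card_split by blast
        ultimately show ?thesis using cT by simp
      qed auto
    qed
    also have "\<dots> = (if s \<in> T then ?t {s} else 0)" using fT by (simp add: sum.delta')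
    also have "\<dots> = (if T = set (s # xs) then 1 else 0)"
    proof (cases "s \<in> T")
      case True
      have fT': "finite (T - {s})" and cT': "card (T - {s}) = length xs" using fT cT True by auto
      have v: "prodl g xs (T - {s}) = (if T - {s} = set xs then 1 else 0)" using IH2[OF fT' cT'] .
      have nsx: "s \<notin> set xs" using lt by auto
      have iff: "(T - {s} = set xs) \<longleftrightarrow> (T = set (s # xs))" using True nsx by auto
      show ?thesis
      proof (cases "T = set (s # xs)")
        case True2: True
        then have "T - {s} = set xs" using iff by simp
        moreover have "gsign {s} (set xs) = 1" using lt by (simp add: gsign_single_low)
        ultimately show ?thesis using True True2 H2 v by simp
      next
        case False
        then show ?thesis using True iff v by simp
      qed
    next
      case False
      then show ?thesis by auto
    qed
    finally show "prodl g (s # xs) T = (if T = set (s # xs) then 1 else 0)" .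
  qed
  show ?case using A B by blast
qed

lemma mono_filt1:
  assumes u: "unitri g M" and fS: "finite S" and nz: "mono_prod g S T \<noteq> 0"
  shows "card S \<le> card T \<and> T \<subseteq> S \<union> M \<and> finite T"
proof -
  have so: "sorted_wrt (<) (sorted_list_of_set S)" by (rule strict_sorted_list_of_set)
  have "length (sorted_list_of_set S) \<le> card T \<and> T \<subseteq> set (sorted_list_of_set S) \<union> M \<and> finite T"
    using conjunct1[OF prodl_filt[OF u so], rule_format] nz unfolding mono_prod_prodl by blast
  then show ?thesis using fS by simp
qed

lemma mono_filt2:
  assumes u: "unitri g M" and fS: "finite S" and fT: "finite T" and c: "card T = card S"
  shows "mono_prod g S T = (if T = S then 1 else 0)"
proof -
  have so: "sorted_wrt (<) (sorted_list_of_set S)" by (rule strict_sorted_list_of_set)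
  have c': "card T = length (sorted_list_of_set S)" using c by simp
  have "prodl g (sorted_list_of_set S) T = (if T = set (sorted_list_of_set S) then 1 else 0)"
    using conjunct2[OF prodl_filt[OF u so], rule_format, OF fT c'] .
  then show ?thesis using fS by (simp add: mono_prod_prodl)
qed

lemma unitri_gen: "unitri gen {}"
  unfolding unitri_def using gen_grass by (auto simp: gen_def)

lemma mono_prod_gen: assumes fS: "finite S" shows "mono_prod (gen :: nat \<Rightarrow> 'a::field grass) S = mon S"
proof (rule ext)
  have one: "mono_prod (gen :: nat \<Rightarrow> 'a::field grass) S S = 1"
    using mono_filt2[OF unitri_gen fS fS refl] by simp
  fix T
  show "mono_prod (gen :: nat \<Rightarrow> 'a grass) S T = mon S T"
  proof (cases "mono_prod (gen :: nat \<Rightarrow> 'a grass) S T = 0")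
    case False
    from mono_filt1[OF unitri_gen fS False] have "card S \<le> card T" "T \<subseteq> S" "finite T" by auto
    then have "T = S" using fS by (simp add: card_seteq)
    then show ?thesis using mono_filt2[OF unitri_gen fS fS refl] by (simp add: mon_def)
  next
    case True
    have "T \<noteq> S" using True one by auto
    then show ?thesis using True unfolding mon_def by simp
  qed
qed

lemma gone_mon: "gone = mon {}"
  by (simp add: gone_def mon_def)



lemma mono_prod_grass[simp]: "(\<And>i. g i \<in> grass) \<Longrightarrow> mono_prod g S \<in> grass"
  by (simp add: mono_prod_prodl)

lemma gen_mult_mon:
  assumes fS: "finite S"
  shows "gmult (gen i) (mon S) = gscale (if i \<in> S then 0 else gsign {i} S) (mon (insert i S))"
proof (rule ext)
  fix T show "gmult (gen i) (mon S) T = gscale (if i \<in> S then 0 else gsign {i} S) (mon (insert i S)) T"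
  proof (cases "finite T")
    case True
    show ?thesis unfolding gmult_gen_left[OF True]
      by (auto simp: gscale_def mon_def)
  next
    case False
    then have "T \<noteq> insert i S" using fS by auto
    then show ?thesis using False by (simp add: gmult_inf gscale_def mon_def)
  qed
qed

lemma mono_prod_gen_mult:
  fixes g :: "nat \<Rightarrow> 'a::field_char_0 grass"
  assumes od: "\<And>i. godd (g i)" and fS: "finite S"
  shows "gmult (g i) (mono_prod g S) = gscale (if i \<in> S then 0 else gsign {i} S) (mono_prod g (insert i S))"
proof (cases "i \<in> S")
  case True
  then show ?thesis
    using prodl_gen_mult[where g=g, OF od, of "sorted_list_of_set S" i] fS
    by (simp add: mono_prod_prodl)
next
  case False
  then show ?thesis
    using prodl_gen_mult[where g=g, OF od, of "sorted_list_of_set S" i] fS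
    by (simp add: mono_prod_prodl sorted_list_of_set_insert)
qed

lemma grass_supp_fin: "x \<in> grass \<Longrightarrow> finite {S. x S \<noteq> 0}"
  by (simp add: grass_def)

lemma grass_fin: "x \<in> grass \<Longrightarrow> x S \<noteq> 0 \<Longrightarrow> finite S"
  by (simp add: grass_def)

lemma Theta_gen:
  fixes g :: "nat \<Rightarrow> 'a::field_char_0 grass"
  assumes gg: "\<And>i. g i \<in> grass" and od: "\<And>i. godd (g i)" and x: "x \<in> grass"
  shows "Lin (mono_prod g) (gmult (gen i) x) = gmult (g i) (Lin (mono_prod g) x)"
proof -
  let ?F = "{S. x S \<noteq> 0}"
  let ?P = "mono_prod g"
  let ?c = "\<lambda>S. if i \<in> S then 0 else gsign {i} S"
  have fF: "finite ?F" using x by (simp add: grass_def)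
  have fS: "\<And>S. S \<in> ?F \<Longrightarrow> finite S" using x by (simp add: grass_def)
  have "gmult (gen i) x = gmult (gen i) (lc ?F x mon)" using lc_mon[OF fF] by simp
  also have "\<dots> = lc ?F x (\<lambda>S. gmult (gen i) (mon S))" by (rule gmult_lc_right)
  finally have e1: "gmult (gen i) x = lc ?F x (\<lambda>S. gmult (gen i) (mon S))" .
  have "Lin ?P (gmult (gen i) x) = lc ?F x (\<lambda>S. Lin ?P (gmult (gen i) (mon S)))"
    unfolding e1 by (rule glinear_lc[OF glinear_Lin fF]) (simp add: grass_fin[OF x])
  also have "\<dots> = lc ?F x (\<lambda>S. gscale (?c S) (?P (insert i S)))"
  proof (rule lc_cong)
    fix S assume "S \<in> ?F"
    then have f: "finite S" by (rule fS)
    show "Lin ?P (gmult (gen i) (mon S)) = gscale (?c S) (?P (insert i S))"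
      unfolding gen_mult_mon[OF f] using f by (simp add: Lin_gscale Lin_mon)
  qed
  also have "\<dots> = lc ?F x (\<lambda>S. gmult (g i) (?P S))"
  proof (rule lc_cong)
    fix S assume "S \<in> ?F"
    then have f: "finite S" by (rule fS)
    show "gscale (?c S) (?P (insert i S)) = gmult (g i) (?P S)"
      using mono_prod_gen_mult[where g=g, OF od f] by simp
  qed
  also have "\<dots> = gmult (g i) (lc ?F x ?P)" by (rule gmult_lc_right[symmetric])
  also have "\<dots> = gmult (g i) (Lin ?P x)" by (simp add: Lin_lc_def)
  finally show ?thesis .
qed

lemma Lin_P_grass:
  assumes gg: "\<And>i. g i \<in> grass" and x: "x \<in> grass"
  shows "Lin (mono_prod g) x \<in> grass"
  by (rule Lin_grass[OF x]) (simp add: gg)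

lemma Theta_list:
  fixes g :: "nat \<Rightarrow> 'a::field_char_0 grass"
  assumes gg: "\<And>i. g i \<in> grass" and od: "\<And>i. godd (g i)" and z: "z \<in> grass"
  shows "Lin (mono_prod g) (gmult (prodl gen xs) z) = gmult (prodl g xs) (Lin (mono_prod g) z)"
proof (induction xs)
  case Nil
  show ?case using z Lin_P_grass[OF gg z] by (simp add: gmult_gone_left)
next
  case (Cons a xs)
  have "Lin (mono_prod g) (gmult (prodl gen (a # xs)) z) = Lin (mono_prod g) (gmult (gen a) (gmult (prodl gen xs) z))"
    by (simp add: gmult_assoc)
  also have "\<dots> = gmult (g a) (Lin (mono_prod g) (gmult (prodl gen xs) z))"
    by (rule Theta_gen[where g=g, OF gg od]) (simp add: z)
  also have "\<dots> = gmult (prodl g (a # xs)) (Lin (mono_prod g) z)"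
    using Cons.IH by (simp add: gmult_assoc)
  finally show ?case .
qed

lemma Theta_mult:
  fixes g :: "nat \<Rightarrow> 'a::field_char_0 grass"
  assumes gg: "\<And>i. g i \<in> grass" and od: "\<And>i. godd (g i)" and x: "x \<in> grass" and y: "y \<in> grass"
  shows "Lin (mono_prod g) (gmult x y) = gmult (Lin (mono_prod g) x) (Lin (mono_prod g) y)"
proof -
  let ?F = "{S. x S \<noteq> 0}"
  let ?P = "mono_prod g"
  have fF: "finite ?F" using x by (simp add: grass_def)
  have fS: "\<And>S. S \<in> ?F \<Longrightarrow> finite S" using x by (simp add: grass_def)
  have "gmult x y = gmult (lc ?F x mon) y" using lc_mon[OF fF] by simp
  also have "\<dots> = lc ?F x (\<lambda>S. gmult (mon S) y)" by (rule gmult_lc_left)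
  finally have e1: "gmult x y = lc ?F x (\<lambda>S. gmult (mon S) y)" .
  have "Lin ?P (gmult x y) = lc ?F x (\<lambda>S. Lin ?P (gmult (mon S) y))"
    unfolding e1 by (rule glinear_lc[OF glinear_Lin fF]) (simp add: grass_fin[OF x] y)
  also have "\<dots> = lc ?F x (\<lambda>S. gmult (?P S) (Lin ?P y))"
  proof (rule lc_cong)
    fix S assume "S \<in> ?F"
    then have "finite S" by (rule fS)
    then have "(mon S :: 'a grass) = prodl gen (sorted_list_of_set S)" "?P S = prodl g (sorted_list_of_set S)"
      by (simp_all add: mono_prod_gen[symmetric] mono_prod_prodl)
    then show "Lin ?P (gmult (mon S) y) = gmult (?P S) (Lin ?P y)"
      using Theta_list[where g=g, OF gg od y] by simp
  qed
  also have "\<dots> = gmult (lc ?F x ?P) (Lin ?P y)" by (rule gmult_lc_left[symmetric])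
  also have "\<dots> = gmult (Lin ?P x) (Lin ?P y)" by (simp add: Lin_lc_def)
  finally show ?thesis .
qed

lemma Theta_gone: "Lin (mono_prod g) gone = gone"
  by (simp add: gone_mon Lin_mon mono_prod_prodl)

definition ghom :: "('a::field grass \<Rightarrow> 'a grass) \<Rightarrow> bool" where
  "ghom h \<longleftrightarrow> glinear h \<and> (\<forall>x\<in>grass. \<forall>y\<in>grass. h (gmult x y) = gmult (h x) (h y)) \<and>
     h gone = gone \<and> (\<forall>x\<in>grass. h x \<in> grass)"

lemma ghom_Theta:
  fixes g :: "nat \<Rightarrow> 'a::field_char_0 grass"
  assumes gg: "\<And>i. g i \<in> grass" and od: "\<And>i. godd (g i)"
  shows "ghom (Lin (mono_prod g))"
  unfolding ghom_def
proof (intro conjI ballI)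
  fix x y :: "'a grass" assume "x \<in> grass" "y \<in> grass"
  then show "Lin (mono_prod g) (gmult x y) = gmult (Lin (mono_prod g) x) (Lin (mono_prod g) y)"
    by (rule Theta_mult[where g=g, OF gg od])
next
  fix x :: "'a grass" assume "x \<in> grass"
  then show "Lin (mono_prod g) x \<in> grass" by (rule Lin_P_grass[where g=g, OF gg])
qed (simp_all add: Theta_gone glinear_Lin)

lemma eval_word_grass: "(\<And>v. \<sigma> v \<in> grass) \<Longrightarrow> eval_word \<sigma> w \<in> grass"
  by (induction w) (simp_all add: eval_word_def)

lemma eval_word_hom:
  assumes h: "ghom h" and s: "\<And>v. \<sigma> v \<in> grass"
  shows "h (eval_word \<sigma> w) = eval_word (\<lambda>v. h (\<sigma> v)) w"
proof (induction w)
  case Nil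
  then show ?case using h by (simp add: eval_word_def ghom_def)
next
  case (Cons v w)
  have "h (eval_word \<sigma> (v # w)) = h (gmult (\<sigma> v) (eval_word \<sigma> w))" by (simp add: eval_word_def)
  also have "\<dots> = gmult (h (\<sigma> v)) (h (eval_word \<sigma> w))"
    using h s eval_word_grass[OF s] by (simp add: ghom_def)
  also have "\<dots> = eval_word (\<lambda>v. h (\<sigma> v)) (v # w)" using Cons.IH by (simp add: eval_word_def)
  finally show ?case .
qed

lemma eval_poly_lc: "eval_poly f \<sigma> = lc {w. f w \<noteq> 0} f (eval_word \<sigma>)"
  by (simp add: eval_poly_def lc_def)

lemma eval_poly_grass:
  assumes f: "f \<in> free_alg" and s: "\<And>v. \<sigma> v \<in> grass"
  shows "eval_poly f \<sigma> \<in> grass"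
  unfolding eval_poly_lc by (rule lc_grass) (use f eval_word_grass[OF s] in \<open>simp_all add: free_alg_def\<close>)

lemma eval_poly_hom:
  assumes h: "ghom h" and f: "f \<in> free_alg" and s: "\<And>v. \<sigma> v \<in> grass"
  shows "h (eval_poly f \<sigma>) = eval_poly f (\<lambda>v. h (\<sigma> v))"
proof -
  have "h (eval_poly f \<sigma>) = lc {w. f w \<noteq> 0} f (\<lambda>w. h (eval_word \<sigma> w))"
    unfolding eval_poly_lc
    by (rule glinear_lc) (use h f eval_word_grass[OF s] in \<open>simp_all add: ghom_def free_alg_def\<close>)
  also have "\<dots> = eval_poly f (\<lambda>v. h (\<sigma> v))"
    unfolding eval_poly_lc by (rule lc_cong) (simp add: eval_word_hom[OF h s])
  finally show ?thesis .
qed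



definition S4ok :: "('a::field_char_0 grass \<Rightarrow> 'a grass) \<Rightarrow> bool" where
  "S4ok \<phi> \<longleftrightarrow> is_automorphism \<phi> \<and> (\<forall>x\<in>grass. \<phi> (\<phi> x) = x) \<and> finite (Jset \<phi>) \<and>
     infinite (Iminus \<phi>) \<and> (\<forall>j\<in>Jset \<phi>. \<forall>S. avec \<phi> j S \<noteq> 0 \<longrightarrow> 3 \<le> card S)"

lemma S4_grass: assumes "S4ok \<phi>" "x \<in> grass" shows "\<phi> x \<in> grass"
proof -
  have "bij_betw \<phi> grass grass" using assms(1) by (simp add: S4ok_def is_automorphism_def)
  then show ?thesis using assms(2) by (rule bij_betw_apply)
qed

lemma S4_ghom: "S4ok \<phi> \<Longrightarrow> ghom \<phi>"
  unfolding ghom_def glinear_def using S4_grass[of \<phi>] by (auto simp: S4ok_def is_automorphism_def)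

lemma S4_invol: "S4ok \<phi> \<Longrightarrow> x \<in> grass \<Longrightarrow> \<phi> (\<phi> x) = x"
  by (simp add: S4ok_def)

lemma gen_neq_gneg: "gen n \<noteq> (gneg (gen n) :: 'a::field_char_0 grass)"
proof
  assume "gen n = (gneg (gen n) :: 'a grass)"
  then have "gen n {n} = (gneg (gen n) {n} :: 'a)" by simp
  then show False by (simp add: gen_def gneg_def)
qed

lemma Iplus_Iminus: "Iplus \<phi> \<inter> Iminus (\<phi> :: 'a::field_char_0 grass \<Rightarrow> 'a grass) = {}"
  using gen_neq_gneg unfolding Iplus_def Iminus_def by (metis (mono_tags, lifting) disjoint_iff mem_Collect_eq)

lemma gsign_nz: "(gsign A B :: 'a::field) \<noteq> 0"
  by (simp add: gsign_def)

lemma phi_gen_odd: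
  fixes \<phi> :: "'a::field_char_0 grass \<Rightarrow> 'a grass"
  assumes s: "S4ok \<phi>" and j: "j \<in> Jset \<phi>"
  shows "godd (\<phi> (gen j))"
proof -
  let ?x = "\<phi> (gen j)"
  have h: "ghom \<phi>" by (rule S4_ghom[OF s])
  have xg: "?x \<in> grass" by (rule S4_grass[OF s gen_grass])
  let ?U = "\<Union>{S. ?x S \<noteq> 0}"
  have fU: "finite ?U" using xg by (auto simp: grass_def)
  have "infinite (Iminus \<phi> - ?U)" using s fU by (simp add: S4ok_def Diff_infinite_finite)
  then obtain i where i: "i \<in> Iminus \<phi>" "i \<notin> ?U" by (metis Diff_iff finite.emptyI ex_in_conv)
  have phii: "\<phi> (gen i) = gneg (gen i)" using i by (simp add: Iminus_def)
  have ac: "gmult (gen i) (gen j) = gneg (gmult (gen j) (gen i))"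
    by (rule gmult_anticomm) simp_all
  have c1: "\<phi> (gmult (gen i) (gen j)) = gneg (gmult (gen i) ?x)"
    using h xg phii by (simp add: ghom_def gneg_scale gmult_scale_left)
  have c2: "\<phi> (gneg (gmult (gen j) (gen i))) = gmult ?x (gen i)"
  proof -
    have "\<phi> (gneg (gmult (gen j) (gen i))) = gneg (\<phi> (gmult (gen j) (gen i)))"
      using h by (simp add: ghom_def glinear_gneg)
    also have "\<dots> = gmult ?x (gen i)"
      using h xg phii by (simp add: ghom_def gneg_scale gmult_scale_right)
    finally show ?thesis .
  qed
  have key: "gneg (gmult (gen i) ?x) = gmult ?x (gen i)" using c1 c2 ac by metis
  show ?thesis unfolding godd_def
  proof (intro allI impI)
    fix S assume nz: "?x S \<noteq> 0"
    have fS: "finite S" using xg nz by (simp add: grass_def)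
    have iS: "i \<notin> S" using i nz by auto
    have fT: "finite (insert i S)" using fS by simp
    have e: "insert i S - {i} = S" using iS by simp
    have "- (gsign {i} S * ?x S) = gsign S {i} * ?x S"
      using fun_cong[OF key, of "insert i S"] unfolding gneg_def gmult_gen_left[OF fT] gmult_gen_right[OF fT] e
      by simp
    moreover have "(gsign S {i} :: 'a) = (-1) ^ card S * gsign {i} S"
      using gsign_swap[of "{i}" S] fS iS by simp
    ultimately have eq: "- (gsign {i} S * ?x S) = (-1) ^ card S * gsign {i} S * ?x S" by simp
    show "odd (card S)"
    proof (rule ccontr)
      assume "\<not> odd (card S)"
      then have "- (gsign {i} S * ?x S) = gsign {i} S * ?x S" using eq by simp
      then have "gsign {i} S * ?x S = (0::'a)" by auto
      moreover have "(gsign {i} S :: 'a) \<noteq> 0" by (rule gsign_nz)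
      ultimately show False using nz by simp
    qed
  qed
qed



definition eps1 :: "('a::field_char_0 grass \<Rightarrow> 'a grass) \<Rightarrow> nat \<Rightarrow> 'a" where
  "eps1 \<phi> i = (if i \<in> Iplus \<phi> then 1 else -1)"

definition gg :: "('a::field_char_0 grass \<Rightarrow> 'a grass) \<Rightarrow> nat \<Rightarrow> 'a grass" where
  "gg \<phi> i = (if i \<in> Jset \<phi> then (\<lambda>U. gen i U - avec \<phi> i U) else gen i)"

definition epsS :: "('a::field_char_0 grass \<Rightarrow> 'a grass) \<Rightarrow> nat set \<Rightarrow> 'a" where
  "epsS \<phi> S = (\<Prod>i\<in>S. eps1 \<phi> i)"

definition Dm :: "('a::field_char_0 grass \<Rightarrow> 'a grass) \<Rightarrow> 'a grass \<Rightarrow> 'a grass" where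
  "Dm \<phi> x = (\<lambda>T. epsS \<phi> T * x T)"

definition Mset :: "('a::field_char_0 grass \<Rightarrow> 'a grass) \<Rightarrow> nat set" where
  "Mset \<phi> = \<Union> ((\<lambda>j. \<Union> {U. gg \<phi> j U \<noteq> 0}) ` Jset \<phi>)"

lemma notJ: "i \<notin> Jset \<phi> \<longleftrightarrow> i \<in> Iplus \<phi> \<or> i \<in> Iminus \<phi>"
  by (simp add: Jset_def Iset_def)

lemma gg_alt:
  assumes "j \<in> Jset \<phi>"
  shows "gg \<phi> j = gscale (1/2) (gadd (gen j) (gneg (\<phi> (gen j))))"
  using assms by (auto simp: gg_def avec_def gscale_def gadd_def gneg_def field_simps)

lemma gg_grass: assumes s: "S4ok \<phi>" shows "gg \<phi> i \<in> grass"
proof (cases "i \<in> Jset \<phi>")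
  case True
  then show ?thesis using S4_grass[OF s gen_grass] by (simp add: gg_alt)
qed (simp add: gg_def)

lemma godd_gneg[simp]: "godd (gneg x) = godd x"
  by (simp add: godd_def gneg_def)

lemma gg_odd: assumes s: "S4ok \<phi>" shows "godd (gg \<phi> i)"
proof (cases "i \<in> Jset \<phi>")
  case True
  then show ?thesis using phi_gen_odd[OF s True] by (simp add: gg_alt)
qed (simp add: gg_def)

lemma phi_gg:
  fixes \<phi> :: "'a::field_char_0 grass \<Rightarrow> 'a grass"
  assumes s: "S4ok \<phi>"
  shows "\<phi> (gg \<phi> i) = gscale (eps1 \<phi> i) (gg \<phi> i)"
proof (cases "i \<in> Jset \<phi>")
  case True
  have h: "ghom \<phi>" by (rule S4_ghom[OF s])
  have xg: "\<phi> (gen i) \<in> grass" by (rule S4_grass[OF s gen_grass])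
  have nI: "i \<notin> Iplus \<phi>" using True by (simp add: Jset_def Iset_def)
  have "\<phi> (gg \<phi> i) = gscale (1/2) (gadd (\<phi> (gen i)) (gneg (\<phi> (\<phi> (gen i)))))"
    using h xg True by (simp add: gg_alt ghom_def glinear_def glinear_gneg)
  also have "\<dots> = gscale (1/2) (gadd (\<phi> (gen i)) (gneg (gen i)))"
    using S4_invol[OF s gen_grass] by simp
  also have "\<dots> = gscale (eps1 \<phi> i) (gg \<phi> i)"
    using True nI by (auto simp: gg_alt eps1_def gscale_def gadd_def gneg_def field_simps)
  finally show ?thesis .
next
  case False
  then consider "i \<in> Iplus \<phi>" | "i \<in> Iminus \<phi>" "i \<notin> Iplus \<phi>"
    using notJ Iplus_Iminus by blast
  then show ?thesis
  proof cases
    case 1 then show ?thesis using False by (simp add: gg_def eps1_def Iplus_def)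
  next
    case 2 then show ?thesis using False by (simp add: gg_def eps1_def Iminus_def gneg_scale)
  qed
qed

lemma avec_single:
  assumes s: "S4ok \<phi>" and j: "j \<in> Jset \<phi>" and c: "card U < 3"
  shows "avec \<phi> j U = 0"
  using s j c by (auto simp: S4ok_def not_le[symmetric])

lemma Mset_fin: assumes s: "S4ok \<phi>" shows "finite (Mset \<phi>)"
proof -
  have "finite (Jset \<phi>)" using s by (simp add: S4ok_def)
  moreover have "finite (\<Union> {U. gg \<phi> j U \<noteq> 0})" for j
    using gg_grass[OF s, of j] by (auto simp: grass_def)
  ultimately show ?thesis by (simp add: Mset_def)
qed

lemma unitri_gg: assumes s: "S4ok \<phi>" shows "unitri (gg \<phi>) (Mset \<phi>)"
  unfolding unitri_def
proof (intro conjI allI impI)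
  fix i show "gg \<phi> i \<in> grass" by (rule gg_grass[OF s])
next
  fix i show "gg \<phi> i {i} = 1"
    using avec_single[OF s, of i "{i}"] by (auto simp: gg_def gen_def)
next
  fix i U assume nz: "gg \<phi> i U \<noteq> 0"
  show "U = {i} \<or> 2 \<le> card U"
  proof (cases "i \<in> Jset \<phi>")
    case True
    show ?thesis
    proof (rule ccontr)
      assume a: "\<not> (U = {i} \<or> 2 \<le> card U)"
      then have "avec \<phi> i U = 0" using avec_single[OF s True, of U] by simp
      then show False using nz a True by (simp add: gg_def gen_def)
    qed
  next
    case False then show ?thesis using nz by (simp add: gg_def gen_def split: if_splits)
  qed
next
  fix i U assume nz: "gg \<phi> i U \<noteq> 0"
  show "U \<subseteq> insert i (Mset \<phi>)"
  proof (cases "i \<in> Jset \<phi>")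
    case True
    then show ?thesis using nz unfolding Mset_def by blast
  next
    case False then show ?thesis using nz by (simp add: gg_def gen_def split: if_splits)
  qed
qed

lemma prodl_scale:
  "prodl (\<lambda>i. gscale (c i) (k i)) xs = gscale (prod_list (map c xs)) (prodl k xs)"
  by (induction xs) (simp_all add: gmult_scale_left gmult_scale_right ac_simps)

lemma mono_prod_scale:
  assumes "finite S"
  shows "mono_prod (\<lambda>i. gscale (c i) (k i)) S = gscale (\<Prod>i\<in>S. c i) (mono_prod k S)"
proof -
  have "(\<Prod>i\<in>S. c i) = prod_list (map c (sorted_list_of_set S))"
    using assms prod.distinct_set_conv_list[of "sorted_list_of_set S" c] by simp
  then show ?thesis by (simp add: mono_prod_prodl prodl_scale)
qed

lemma ghom_prodl: "ghom h \<Longrightarrow> (\<And>i. g i \<in> grass) \<Longrightarrow> h (prodl g xs) = prodl (\<lambda>i. h (g i)) xs"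
  by (induction xs) (simp_all add: ghom_def)

lemma ghom_mono_prod: "ghom h \<Longrightarrow> (\<And>i. g i \<in> grass) \<Longrightarrow> h (mono_prod g S) = mono_prod (\<lambda>i. h (g i)) S"
  by (simp add: mono_prod_prodl ghom_prodl)

lemma lin_part_eq:
  fixes \<phi> :: "'a::field_char_0 grass \<Rightarrow> 'a grass"
  assumes s: "S4ok \<phi>"
  shows "lin_part \<phi> i = gscale (eps1 \<phi> i) (gen i)"
proof (rule ext)
  fix U
  consider "i \<in> Jset \<phi>" | "i \<in> Iplus \<phi>" | "i \<in> Iminus \<phi>" "i \<notin> Iplus \<phi>"
    using notJ Iplus_Iminus by blast
  then show "lin_part \<phi> i U = gscale (eps1 \<phi> i) (gen i) U"
  proof cases
    case 1
    have nI: "i \<notin> Iplus \<phi>" using 1 by (simp add: Jset_def Iset_def)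
    have e: "\<phi> (gen i) U = 2 * avec \<phi> i U - gen i U" by (simp add: avec_def field_simps)
    show ?thesis
    proof (cases "card U = 1")
      case True
      then have "avec \<phi> i U = 0" using avec_single[OF s 1, of U] by simp
      then show ?thesis using True nI by (simp add: lin_part_def e eps1_def gscale_def)
    next
      case False
      then have "gen i U = (0::'a)" by (auto simp: gen_def)
      then show ?thesis using False nI by (simp add: lin_part_def eps1_def gscale_def)
    qed
  next
    case 2 then show ?thesis by (auto simp: lin_part_def eps1_def gscale_def Iplus_def gen_def)
  next
    case 3 then show ?thesis by (auto simp: lin_part_def eps1_def gscale_def Iminus_def gen_def gneg_def)
  qed
qed

lemma epsS_nz: "epsS \<phi> S \<noteq> 0"
  unfolding epsS_def by (cases "finite S") (auto simp: eps1_def)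

lemma Dm_grass: "x \<in> grass \<Longrightarrow> Dm \<phi> x \<in> grass"
  by (simp add: Dm_def grass_def epsS_nz)

lemma supp_Dm: "{S. Dm \<phi> x S \<noteq> 0} = {S. x S \<noteq> 0}"
  by (simp add: Dm_def epsS_nz)

lemma linearization_Dm:
  fixes \<phi> :: "'a::field_char_0 grass \<Rightarrow> 'a grass"
  assumes s: "S4ok \<phi>" and x: "x \<in> grass"
  shows "linearization \<phi> x = Dm \<phi> x"
proof (rule ext)
  fix T
  have "linearization \<phi> x T = (\<Sum>S\<in>{S. x S \<noteq> 0}. if T = S then epsS \<phi> T * x T else 0)"
    unfolding linearization_def
  proof (rule sum.cong[OF refl])
    fix S assume "S \<in> {S. x S \<noteq> 0}"
    then have f: "finite S" using x by (simp add: grass_def)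
    have "mono_prod (lin_part \<phi>) S = gscale (epsS \<phi> S) (mon S)"
      unfolding lin_part_eq[OF s, abs_def] using f
      by (simp add: mono_prod_scale mono_prod_gen epsS_def)
    then show "x S * mono_prod (lin_part \<phi>) S T = (if T = S then epsS \<phi> T * x T else 0)"
      by (simp add: gscale_def mon_def)
  qed
  also have "\<dots> = Dm \<phi> x T"
    using x by (simp add: sum.delta' grass_def Dm_def)
  finally show "linearization \<phi> x T = Dm \<phi> x T" .
qed

lemma theta_Dm:
  fixes \<phi> :: "'a::field_char_0 grass \<Rightarrow> 'a grass"
  assumes s: "S4ok \<phi>" and x: "x \<in> grass"
  shows "Lin (mono_prod (gg \<phi>)) (Dm \<phi> x) = \<phi> (Lin (mono_prod (gg \<phi>)) x)"
proof -
  let ?P = "mono_prod (gg \<phi>)"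
  let ?F = "{S. x S \<noteq> 0}"
  have fF: "finite ?F" using x by (simp add: grass_def)
  have h: "ghom \<phi>" by (rule S4_ghom[OF s])
  have Pg: "\<And>S. ?P S \<in> grass" using gg_grass[OF s] by simp
  have "\<phi> (Lin ?P x) = \<phi> (lc ?F x ?P)" by (simp add: Lin_lc_def)
  also have "\<dots> = lc ?F x (\<lambda>S. \<phi> (?P S))"
    by (rule glinear_lc) (use h fF Pg in \<open>simp_all add: ghom_def\<close>)
  also have "\<dots> = lc ?F x (\<lambda>S. gscale (epsS \<phi> S) (?P S))"
  proof (rule lc_cong)
    fix S assume "S \<in> ?F"
    then have f: "finite S" using x by (simp add: grass_def)
    have "\<phi> (?P S) = mono_prod (\<lambda>i. \<phi> (gg \<phi> i)) S"
      by (rule ghom_mono_prod[OF h gg_grass[OF s]])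
    also have "\<dots> = mono_prod (\<lambda>i. gscale (eps1 \<phi> i) (gg \<phi> i)) S"
      by (simp add: phi_gg[OF s])
    also have "\<dots> = gscale (epsS \<phi> S) (?P S)"
      using f by (simp add: mono_prod_scale epsS_def)
    finally show "\<phi> (?P S) = gscale (epsS \<phi> S) (?P S)" .
  qed
  also have "\<dots> = Lin ?P (Dm \<phi> x)"
    unfolding Lin_lc_def supp_Dm by (simp add: lc_def Dm_def gscale_def ac_simps)
  finally show ?thesis by simp
qed



lemma theta_inj0:
  assumes u: "unitri g M" and x: "x \<in> grass" and z: "Lin (mono_prod g) x = (\<lambda>_. 0)"
  shows "x = (\<lambda>_. 0)"
proof (rule ccontr)
  assume nx: "x \<noteq> (\<lambda>_. 0)"
  let ?F = "{S. x S \<noteq> 0}"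
  let ?P = "mono_prod g"
  have fF: "finite ?F" using x by (simp add: grass_def)
  have ne: "?F \<noteq> {}" using nx by auto
  define n where "n = Min (card ` ?F)"
  have "n \<in> card ` ?F" unfolding n_def using fF ne by simp
  then obtain S0 where S0: "S0 \<in> ?F" "card S0 = n" by blast
  have mn: "\<And>S. S \<in> ?F \<Longrightarrow> card S0 \<le> card S" using fF S0 unfolding n_def by simp
  have fin: "\<And>S. S \<in> ?F \<Longrightarrow> finite S" using x by (simp add: grass_def)
  have zero: "x S * ?P S S0 = 0" if S: "S \<in> ?F - {S0}" for S
  proof (rule ccontr)
    assume "x S * ?P S S0 \<noteq> 0"
    then have nz: "?P S S0 \<noteq> 0" by simp
    from mono_filt1[OF u fin nz] S have "card S \<le> card S0" "finite S0" by auto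
    then have "card S0 = card S" using mn S by force
    moreover have "finite S" using S fin by blast
    ultimately have "?P S S0 = (if S0 = S then 1 else 0)" using mono_filt2[OF u \<open>finite S\<close> \<open>finite S0\<close>] by auto
    moreover have "S \<noteq> S0" using S by blast
    ultimately show False using nz by simp
  qed
  have "Lin ?P x S0 = x S0 * ?P S0 S0 + (\<Sum>S\<in>?F - {S0}. x S * ?P S S0)"
    unfolding Lin_def using sum.remove[OF fF S0(1)] by simp
  also have "\<dots> = x S0" using zero mono_filt2[OF u fin[OF S0(1)] fin[OF S0(1)] refl] by simp
  finally have "Lin ?P x S0 = x S0" .
  then show False using z S0 by (metis mem_Collect_eq)
qed

lemma theta_inj:
  fixes g :: "nat \<Rightarrow> 'a::field grass"
  assumes u: "unitri g M" and x: "x \<in> grass" and y: "y \<in> grass"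
    and e: "Lin (mono_prod g) x = Lin (mono_prod g) y"
  shows "x = y"
proof -
  let ?P = "mono_prod g"
  let ?d = "gadd x (gscale (-1) y)"
  have dg: "?d \<in> grass" using x y by simp
  have "Lin ?P ?d = gadd (Lin ?P x) (gscale (-1) (Lin ?P y))"
    using x y by (simp add: Lin_gadd Lin_gscale)
  also have "\<dots> = (\<lambda>_. 0)" using e by (simp add: gadd_def gscale_def)
  finally have "?d = (\<lambda>_. 0)" by (rule theta_inj0[OF u dg])
  then show "x = y" by (auto simp: gadd_def gscale_def fun_eq_iff)
qed

lemma surj_mon:
  fixes g :: "nat \<Rightarrow> 'a::field grass"
  assumes u: "unitri g M" and fM': "finite M'" and MM: "M \<subseteq> M'"
  shows "T \<subseteq> M' \<Longrightarrow> \<exists>y\<in>grass. Lin (mono_prod g) y = mon T"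
proof (induction "card M' - card T" arbitrary: T rule: less_induct)
  case less
  let ?P = "mono_prod g"
  have TM: "T \<subseteq> M'" by (rule less.prems)
  have fT: "finite T" using TM fM' by (rule finite_subset)
  have gg: "\<And>i. g i \<in> grass" using u by (simp add: unitri_def)
  define R where "R = (\<lambda>U. if U = T then 0 else ?P T U)"
  have Rs: "U \<subseteq> M' \<and> card T < card U" if nz: "R U \<noteq> 0" for U
  proof -
    have UT: "U \<noteq> T" and nz2: "?P T U \<noteq> 0" using nz by (auto simp: R_def split: if_splits)
    from mono_filt1[OF u fT nz2] have c: "card T \<le> card U" and s: "U \<subseteq> T \<union> M" and fU: "finite U" by auto
    have "card U \<noteq> card T"
    proof
      assume "card U = card T"
      then have "?P T U = 0" using mono_filt2[OF u fT fU] UT by simp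
      then show False using nz2 by simp
    qed
    then show ?thesis using c s TM MM by auto
  qed
  have fR: "finite {U. R U \<noteq> 0}"
    by (rule finite_subset[of _ "Pow M'"]) (use Rs fM' in auto)
  have ex: "\<forall>U\<in>{U. R U \<noteq> 0}. \<exists>y\<in>grass. Lin ?P y = mon U"
  proof
    fix U assume "U \<in> {U. R U \<noteq> 0}"
    then have a: "U \<subseteq> M'" "card T < card U" using Rs by auto
    have "card U \<le> card M'" using a fM' by (simp add: card_mono)
    then have "card M' - card U < card M' - card T" using a by simp
    then show "\<exists>y\<in>grass. Lin ?P y = mon U" using less.hyps a by blast
  qed
  then have ex': "\<forall>U\<in>{U. R U \<noteq> 0}. \<exists>y. y \<in> grass \<and> Lin ?P y = mon U" by blast
  obtain yy where yy0: "\<forall>U\<in>{U. R U \<noteq> 0}. yy U \<in> grass \<and> Lin ?P (yy U) = mon U"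
    using bchoice[OF ex'] by blast
  then have yy: "\<And>U. U \<in> {U. R U \<noteq> 0} \<Longrightarrow> yy U \<in> grass \<and> Lin ?P (yy U) = mon U" by blast
  define y where "y = gadd (mon T) (gscale (-1) (lc {U. R U \<noteq> 0} R yy))"
  have lg: "lc {U. R U \<noteq> 0} R yy \<in> grass" by (rule lc_grass[OF fR]) (use yy in blast)
  have yg: "y \<in> grass" unfolding y_def using fT lg by simp
  have "Lin ?P y = gadd (?P T) (gscale (-1) (Lin ?P (lc {U. R U \<noteq> 0} R yy)))"
    unfolding y_def using fT lg by (simp add: Lin_gadd Lin_gscale Lin_mon)
  also have "Lin ?P (lc {U. R U \<noteq> 0} R yy) = lc {U. R U \<noteq> 0} R (\<lambda>U. Lin ?P (yy U))"
    by (rule glinear_lc[OF glinear_Lin fR]) (use yy in blast)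
  also have "\<dots> = lc {U. R U \<noteq> 0} R mon"
    by (rule lc_cong) (use yy in blast)
  also have "\<dots> = R" by (rule lc_mon[OF fR])
  also have "gadd (?P T) (gscale (-1) R) = mon T"
  proof (rule ext)
    fix U show "gadd (?P T) (gscale (-1) R) U = mon T U"
      using mono_filt2[OF u fT fT refl] by (simp add: gadd_def gscale_def R_def mon_def)
  qed
  finally show ?case using yg by blast
qed

lemma theta_surj:
  fixes g :: "nat \<Rightarrow> 'a::field grass"
  assumes u: "unitri g M" and fM: "finite M" and x: "x \<in> grass"
  shows "\<exists>y\<in>grass. Lin (mono_prod g) y = x"
proof -
  let ?P = "mono_prod g"
  let ?F = "{S. x S \<noteq> 0}"
  define M' where "M' = M \<union> \<Union> ?F"
  have fF: "finite ?F" using x by (simp add: grass_def)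
  have fM': "finite M'" unfolding M'_def using fM fF x by (auto simp: grass_def)
  have "\<forall>S\<in>?F. \<exists>y\<in>grass. Lin ?P y = mon S"
  proof
    fix S assume "S \<in> ?F"
    then have "S \<subseteq> M'" unfolding M'_def by blast
    moreover have "M \<subseteq> M'" by (simp add: M'_def)
    ultimately show "\<exists>y\<in>grass. Lin ?P y = mon S" using surj_mon[OF u fM'] by blast
  qed
  then have ex': "\<forall>S\<in>?F. \<exists>y. y \<in> grass \<and> Lin ?P y = mon S" by blast
  obtain yy where yy0: "\<forall>S\<in>?F. yy S \<in> grass \<and> Lin ?P (yy S) = mon S"
    using bchoice[OF ex'] by blast
  then have yy: "\<And>S. S \<in> ?F \<Longrightarrow> yy S \<in> grass \<and> Lin ?P (yy S) = mon S" by blast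
  have lg: "lc ?F x yy \<in> grass" by (rule lc_grass[OF fF]) (use yy in blast)
  have "Lin ?P (lc ?F x yy) = lc ?F x (\<lambda>S. Lin ?P (yy S))"
    by (rule glinear_lc[OF glinear_Lin fF]) (use yy in blast)
  also have "\<dots> = lc ?F x mon" by (rule lc_cong) (use yy in blast)
  also have "\<dots> = x" by (rule lc_mon[OF fF])
  finally show ?thesis using lg by blast
qed



lemma graded_grass: "graded_assignment \<psi> \<sigma> \<Longrightarrow> \<sigma> v \<in> grass"
  by (cases v) (auto simp: graded_assignment_def even_part_def odd_part_def)

theorem mainTheorem4:
  fixes \<phi> :: "'a::field_char_0 grass \<Rightarrow> 'a grass"
  assumes aut: "is_automorphism \<phi>"
    and invol: "\<forall>x\<in>grass. \<phi> (\<phi> x) = x"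
    and S4_plus: "finite (Iplus \<phi>)"
    and S4_minus: "infinite (Iminus \<phi>)"
    and S4_J: "finite (Jset \<phi>)" "Jset \<phi> \<noteq> {}"
    and len3: "\<forall>j\<in>Jset \<phi>. \<forall>S. avec \<phi> j S \<noteq> 0 \<longrightarrow> 3 \<le> card S"
  shows "T2 \<phi> = T2 (linearization \<phi>)"
proof -
  have s: "S4ok \<phi>" using assms by (simp add: S4ok_def)
  define th where "th = Lin (mono_prod (gg \<phi>))"
  have hth: "ghom th" unfolding th_def by (rule ghom_Theta[OF gg_grass[OF s] gg_odd[OF s]])
  have u: "unitri (gg \<phi>) (Mset \<phi>)" by (rule unitri_gg[OF s])
  have fM: "finite (Mset \<phi>)" by (rule Mset_fin[OF s])
  have inj: "\<And>x y. x \<in> grass \<Longrightarrow> y \<in> grass \<Longrightarrow> th x = th y \<Longrightarrow> x = y"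
    unfolding th_def using theta_inj[OF u] by blast
  have surj: "\<And>x. x \<in> grass \<Longrightarrow> \<exists>y\<in>grass. th y = x"
    unfolding th_def using theta_surj[OF u fM] by blast
  have comm: "\<And>x. x \<in> grass \<Longrightarrow> th (Dm \<phi> x) = \<phi> (th x)"
    unfolding th_def using theta_Dm[OF s] by blast
  have lin: "\<And>x. x \<in> grass \<Longrightarrow> linearization \<phi> x = Dm \<phi> x"
    using linearization_Dm[OF s] by blast
  have thg: "\<And>x. x \<in> grass \<Longrightarrow> th x \<in> grass" using hth by (simp add: ghom_def)
  have thneg: "\<And>x. x \<in> grass \<Longrightarrow> th (gneg x) = gneg (th x)"
    using hth by (simp add: ghom_def glinear_gneg)
  have th0: "th (\<lambda>_. 0) = (\<lambda>_. 0)" by (simp add: th_def)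
  show ?thesis
  proof (rule set_eqI)
    fix f
    show "f \<in> T2 \<phi> \<longleftrightarrow> f \<in> T2 (linearization \<phi>)"
    proof
      assume f: "f \<in> T2 \<phi>"
      then have fa: "f \<in> free_alg" and H: "\<And>\<sigma>. graded_assignment \<phi> \<sigma> \<Longrightarrow> eval_poly f \<sigma> = (\<lambda>_. 0)"
        by (auto simp: T2_def)
      show "f \<in> T2 (linearization \<phi>)" unfolding T2_def
      proof (intro CollectI conjI allI impI)
        show "f \<in> free_alg" by (rule fa)
        fix \<sigma> assume g: "graded_assignment (linearization \<phi>) \<sigma>"
        have sg: "\<And>v. \<sigma> v \<in> grass" using g by (rule graded_grass)
        have g': "graded_assignment \<phi> (\<lambda>v. th (\<sigma> v))"
          unfolding graded_assignment_def even_part_def odd_part_def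
        proof (intro conjI allI CollectI)
          fix k
          show "th (\<sigma> (Inl k)) \<in> grass" by (rule thg[OF sg])
          have "linearization \<phi> (\<sigma> (Inl k)) = \<sigma> (Inl k)"
            using g by (simp add: graded_assignment_def even_part_def)
          then have d: "Dm \<phi> (\<sigma> (Inl k)) = \<sigma> (Inl k)" using lin[OF sg] by simp
          have e: "th (Dm \<phi> (\<sigma> (Inl k))) = \<phi> (th (\<sigma> (Inl k)))" by (rule comm[OF sg])
          show "\<phi> (th (\<sigma> (Inl k))) = th (\<sigma> (Inl k))" using e unfolding d by (rule sym)
        next
          fix k
          show "th (\<sigma> (Inr k)) \<in> grass" by (rule thg[OF sg])
          have "linearization \<phi> (\<sigma> (Inr k)) = gneg (\<sigma> (Inr k))"
            using g by (simp add: graded_assignment_def odd_part_def)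
          then have d: "Dm \<phi> (\<sigma> (Inr k)) = gneg (\<sigma> (Inr k))" using lin[OF sg] by simp
          have e: "th (Dm \<phi> (\<sigma> (Inr k))) = \<phi> (th (\<sigma> (Inr k)))" by (rule comm[OF sg])
          show "\<phi> (th (\<sigma> (Inr k))) = gneg (th (\<sigma> (Inr k)))"
            using e unfolding d thneg[OF sg] by (rule sym)
        qed
        have "th (eval_poly f \<sigma>) = eval_poly f (\<lambda>v. th (\<sigma> v))"
          by (rule eval_poly_hom[OF hth fa sg])
        also have "\<dots> = (\<lambda>_. 0)" by (rule H[OF g'])
        finally have "th (eval_poly f \<sigma>) = th (\<lambda>_. 0)" using th0 by simp
        then show "eval_poly f \<sigma> = (\<lambda>_. 0)"
          by (rule inj[OF eval_poly_grass[OF fa sg] zero_grass])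
      qed
    next
      assume f: "f \<in> T2 (linearization \<phi>)"
      then have fa: "f \<in> free_alg" and H: "\<And>\<sigma>. graded_assignment (linearization \<phi>) \<sigma> \<Longrightarrow> eval_poly f \<sigma> = (\<lambda>_. 0)"
        by (auto simp: T2_def)
      show "f \<in> T2 \<phi>" unfolding T2_def
      proof (intro CollectI conjI allI impI)
        show "f \<in> free_alg" by (rule fa)
        fix \<sigma> assume g: "graded_assignment \<phi> \<sigma>"
        have sg: "\<And>v. \<sigma> v \<in> grass" using g by (rule graded_grass)
        have "\<forall>v. \<exists>y. y \<in> grass \<and> th y = \<sigma> v" using surj[OF sg] by blast
        then have "\<exists>y. \<forall>v. y v \<in> grass \<and> th (y v) = \<sigma> v" by (rule choice)
        then obtain y where y0: "\<forall>v. y v \<in> grass \<and> th (y v) = \<sigma> v" by blast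
        then have y: "\<And>v. y v \<in> grass \<and> th (y v) = \<sigma> v" by blast
        have yg: "\<And>v. y v \<in> grass" using y by blast
        have sy: "\<sigma> = (\<lambda>v. th (y v))" using y by auto
        have g': "graded_assignment (linearization \<phi>) y"
          unfolding graded_assignment_def even_part_def odd_part_def
        proof (intro conjI allI CollectI)
          fix k
          show "y (Inl k) \<in> grass" by (rule yg)
          have "\<phi> (\<sigma> (Inl k)) = \<sigma> (Inl k)" using g by (simp add: graded_assignment_def even_part_def)
          moreover have "th (Dm \<phi> (y (Inl k))) = \<phi> (th (y (Inl k)))" by (rule comm[OF yg])
          moreover have "th (y (Inl k)) = \<sigma> (Inl k)" using y by blast
          ultimately have "th (Dm \<phi> (y (Inl k))) = th (y (Inl k))" by simp
          then have "Dm \<phi> (y (Inl k)) = y (Inl k)" by (rule inj[OF Dm_grass[OF yg] yg])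
          then show "linearization \<phi> (y (Inl k)) = y (Inl k)" using lin[OF yg] by simp
        next
          fix k
          show "y (Inr k) \<in> grass" by (rule yg)
          have "\<phi> (\<sigma> (Inr k)) = gneg (\<sigma> (Inr k))" using g by (simp add: graded_assignment_def odd_part_def)
          moreover have "th (Dm \<phi> (y (Inr k))) = \<phi> (th (y (Inr k)))" by (rule comm[OF yg])
          moreover have "th (y (Inr k)) = \<sigma> (Inr k)" using y by blast
          moreover have "th (gneg (y (Inr k))) = gneg (th (y (Inr k)))" by (rule thneg[OF yg])
          ultimately have "th (Dm \<phi> (y (Inr k))) = th (gneg (y (Inr k)))" by simp
          then have "Dm \<phi> (y (Inr k)) = gneg (y (Inr k))" by (rule inj[OF Dm_grass[OF yg] gneg_grass[OF yg]])
          then show "linearization \<phi> (y (Inr k)) = gneg (y (Inr k))" using lin[OF yg] by simp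
        qed
        have "eval_poly f \<sigma> = th (eval_poly f y)"
          unfolding sy by (rule eval_poly_hom[OF hth fa yg, symmetric])
        also have "\<dots> = (\<lambda>_. 0)" using H[OF g'] th0 by simp
        finally show "eval_poly f \<sigma> = (\<lambda>_. 0)" .
      qed
    qed
  qed
qed

end
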